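(* Let $V:\mathbb{R}\to\mathbb{R}$ be $d$-periodic, let $\Gamma(x)=\Gamma_{+}\,\chi_{[0,\infty)}(x)+\Gamma_{-}\,\chi_{(-\infty,0)}(x)$ with $\Gamma_\pm\in\mathbb{R}$, let $\mu_s\in\mathbb{R}$, and let $\phi_s:\mathbb{R}\to\mathbb{R}$ be an exponentially localized solution of $\phi''+\mu_s\phi-V(x)\phi+\Gamma(x)\phi^3=0$ on $\mathbb{R}$. Consider the operator $$\mathbb{L}:=-i\begin{pmatrix}-\partial_x^2-\mu_s+V(x)-2\Gamma(x)\phi_s^2 & -\Gamma(x)\phi_s^2\\ \Gamma(x)\phi_s^2 & \partial_x^2+\mu_s-V(x)+2\Gamma(x)\phi_s^2\end{pmatrix}$$ acting on pairs $(u_1,u_2)$ of functions on $\mathbb{R}$. Then every eigenvalue $\lambda\in\sigma_{\mathrm{disc}}(\mathbb{L})$ satisfies $$|\mathrm{Re}(\lambda)|\le \|\Gamma\|_\infty\,\|\phi_s\|_\infty^2 .$$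
   Context: $\chi_I$ denotes the indicator function of $I$. $\sigma_{\mathrm{disc}}(\mathbb{L})$ is the set of isolated eigenvalues of $\mathbb{L}$ in $L^2(\mathbb{R})\times L^2(\mathbb{R})$, i.e. $\lambda\in\mathbb{C}$ for which there is a nonzero $(u_1,u_2)\in H^2(\mathbb{R})^2$ with $\mathbb{L}(u_1,u_2)^T=\lambda(u_1,u_2)^T$. *)

theory Defs
  imports "HOL-Analysis.Analysis"
begin

definition L2fun :: "(real \<Rightarrow> 'a::{real_normed_vector, second_countable_topology}) \<Rightarrow> bool" where
  "L2fun f \<longleftrightarrow> f \<in> borel_measurable lborel \<and> integrable lborel (\<lambda>x. (norm (f x))^2)"

text \<open>u belongs to H^2(R) with (weak) first derivative du and second derivative ddu:
  u is differentiable with derivative du, du is locally absolutely continuous with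
  derivative ddu (fundamental theorem of calculus), and u, du, ddu are all in L^2.\<close>
definition H2_with :: "(real \<Rightarrow> complex) \<Rightarrow> (real \<Rightarrow> complex) \<Rightarrow> (real \<Rightarrow> complex) \<Rightarrow> bool" where
  "H2_with u du ddu \<longleftrightarrow>
     (\<forall>x. (u has_vector_derivative du x) (at x)) \<and>
     (\<forall>a b. a \<le> b \<longrightarrow> (ddu has_integral (du b - du a)) {a..b}) \<and>
     L2fun u \<and> L2fun du \<and> L2fun ddu"

definition Gam :: "real \<Rightarrow> real \<Rightarrow> real \<Rightarrow> real" where
  "Gam Gp Gm x = Gp * indicator {0..} x + Gm * indicator {..<0} x"

definition sup_norm :: "(real \<Rightarrow> real) \<Rightarrow> real" where
  "sup_norm f = Sup (range (\<lambda>x. \<bar>f x\<bar>))"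

definition periodic_with :: "real \<Rightarrow> (real \<Rightarrow> real) \<Rightarrow> bool" where
  "periodic_with d V \<longleftrightarrow> d > 0 \<and> (\<forall>x. V (x + d) = V x)"

definition exp_localized :: "(real \<Rightarrow> real) \<Rightarrow> bool" where
  "exp_localized \<phi> \<longleftrightarrow> (\<exists>C \<kappa>. \<kappa> > 0 \<and> (\<forall>x. \<bar>\<phi> x\<bar> \<le> C * exp (- \<kappa> * \<bar>x\<bar>)))"

definition stationary_solution ::
  "(real \<Rightarrow> real) \<Rightarrow> (real \<Rightarrow> real) \<Rightarrow> real \<Rightarrow> (real \<Rightarrow> real) \<Rightarrow> bool" where
  "stationary_solution V G \<mu> \<phi> \<longleftrightarrow>
     (\<exists>d\<phi> dd\<phi>. (\<forall>x. (\<phi> has_real_derivative d\<phi> x) (at x)) \<and>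
        (\<forall>a b. a \<le> b \<longrightarrow> (dd\<phi> has_integral (d\<phi> b - d\<phi> a)) {a..b}) \<and>
        (AE x in lborel. dd\<phi> x + \<mu> * \<phi> x - V x * \<phi> x + G x * (\<phi> x)^3 = 0))"

text \<open>Eigenvalues of the linearized operator L with eigenfunctions in H^2(R) x H^2(R).\<close>
definition disc_spec ::
  "(real \<Rightarrow> real) \<Rightarrow> (real \<Rightarrow> real) \<Rightarrow> real \<Rightarrow> (real \<Rightarrow> real) \<Rightarrow> complex set" where
  "disc_spec V G \<mu> \<phi> = {lam. \<exists>u1 du1 ddu1 u2 du2 ddu2.
      H2_with u1 du1 ddu1 \<and> H2_with u2 du2 ddu2 \<and>
      \<not> (AE x in lborel. u1 x = 0 \<and> u2 x = 0) \<and>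
      (AE x in lborel.
         - \<i> * (- ddu1 x - of_real \<mu> * u1 x + of_real (V x) * u1 x
                 - of_real (2 * G x * (\<phi> x)^2) * u1 x - of_real (G x * (\<phi> x)^2) * u2 x)
           = lam * u1 x \<and>
         - \<i> * (of_real (G x * (\<phi> x)^2) * u1 x + ddu2 x + of_real \<mu> * u2 x
                 - of_real (V x) * u2 x + of_real (2 * G x * (\<phi> x)^2) * u2 x)
           = lam * u2 x)}"

end

theory Submission
  imports Defs
begin

lemma borel_measurable_cnj' [measurable]:
  "g \<in> borel_measurable M \<Longrightarrow> (\<lambda>x. cnj (g x :: complex)) \<in> borel_measurable M"
  by (rule borel_measurable_continuous_on[where f=cnj]) (simp add: continuous_on_cnj continuous_on_id)

lemma L2_set_integrable:
  fixes f :: "real \<Rightarrow> complex"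
  assumes "L2fun f"
  shows "set_integrable lborel {a..b} f"
  unfolding set_integrable_def
proof (rule Bochner_Integration.integrable_bound)
  show "integrable lborel (\<lambda>x. indicator {a..b} x + (norm (f x))^2 :: real)"
    using assms unfolding L2fun_def
    by (intro Bochner_Integration.integrable_add) (auto simp: integrable_indicator_iff emeasure_lborel_Icc_eq)
  have [measurable]: "f \<in> borel_measurable lborel"
    using assms unfolding L2fun_def by auto
  show "(\<lambda>x. indicator {a..b} x *\<^sub>R f x) \<in> borel_measurable lborel"
    by measurable
  show "AE x in lborel. norm (indicator {a..b} x *\<^sub>R f x) \<le> norm (indicator {a..b} x + (norm (f x))^2 :: real)"
  proof (rule AE_I2)
    fix x
    have "0 \<le> (norm (f x) - 1)^2" by simp
    then have "2 * norm (f x) \<le> 1 + norm (f x) * norm (f x)"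
      by (simp add: power2_eq_square algebra_simps)
    then have "norm (f x) \<le> 1 + (norm (f x))^2"
      using norm_ge_zero[of "f x"] unfolding power2_eq_square by linarith
    then show "norm (indicator {a..b} x *\<^sub>R f x) \<le> norm (indicator {a..b} x + (norm (f x))^2 :: real)"
      by (auto simp: indicator_def)
  qed
qed

lemma L2_prod_integrable:
  fixes f g :: "real \<Rightarrow> complex"
  assumes "L2fun f" "L2fun g"
  shows "integrable lborel (\<lambda>x. f x * cnj (g x))"
proof (rule Bochner_Integration.integrable_bound)
  show "integrable lborel (\<lambda>x. (norm (f x))^2 + (norm (g x))^2 :: real)"
    using assms unfolding L2fun_def by auto
  have [measurable]: "f \<in> borel_measurable lborel" "g \<in> borel_measurable lborel"
    using assms unfolding L2fun_def by auto
  show "(\<lambda>x. f x * cnj (g x)) \<in> borel_measurable lborel"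
    by measurable
  show "AE x in lborel. norm (f x * cnj (g x)) \<le> norm ((norm (f x))^2 + (norm (g x))^2 :: real)"
  proof (rule AE_I2)
    fix x
    have "0 \<le> (norm (f x) - norm (g x))^2" by simp
    then have "2 * (norm (f x) * norm (g x)) \<le> norm (f x) * norm (f x) + norm (g x) * norm (g x)"
      by (simp add: power2_eq_square algebra_simps)
    then have "norm (f x) * norm (g x) \<le> (norm (f x))^2 + (norm (g x))^2"
      using mult_nonneg_nonneg[OF norm_ge_zero[of "f x"] norm_ge_zero[of "g x"]]
      unfolding power2_eq_square by linarith
    then show "norm (f x * cnj (g x)) \<le> norm ((norm (f x))^2 + (norm (g x))^2 :: real)"
      by (simp add: norm_mult)
  qed
qed

lemma H2_LINT_ddu:
  assumes H: "H2_with u du ddu" and sb: "s \<le> b"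
  shows "(\<integral>t. indicator {s..b} t *\<^sub>R ddu t \<partial>lborel) = du b - du s"
proof -
  have L: "L2fun ddu" and I: "(ddu has_integral (du b - du s)) {s..b}"
    using H sb unfolding H2_with_def by auto
  have "set_lebesgue_integral lborel {s..b} ddu = integral {s..b} ddu"
    by (rule set_borel_integral_eq_integral(2)[OF L2_set_integrable[OF L]])
  also have "\<dots> = du b - du s" using I by (rule integral_unique)
  finally show ?thesis unfolding set_lebesgue_integral_def .
qed

lemma H2_LINT_du:
  assumes H: "H2_with u du ddu" and at: "a \<le> t"
  shows "(\<integral>x. indicator {a..t} x *\<^sub>R du x \<partial>lborel) = u t - u a"
proof -
  have L: "L2fun du" and D: "\<And>x. (u has_vector_derivative du x) (at x)"
    using H unfolding H2_with_def by auto
  have I: "(du has_integral (u t - u a)) {a..t}"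
    using at D by (intro fundamental_theorem_of_calculus) (auto intro: has_vector_derivative_at_within)
  have "set_lebesgue_integral lborel {a..t} du = integral {a..t} du"
    by (rule set_borel_integral_eq_integral(2)[OF L2_set_integrable[OF L]])
  also have "\<dots> = u t - u a" using I by (rule integral_unique)
  finally show ?thesis unfolding set_lebesgue_integral_def .
qed

lemma H2_ibp:
  assumes H: "H2_with u du ddu" and ab: "a \<le> b"
  shows "(\<integral>t. indicator {a..b} t *\<^sub>R (ddu t * cnj (u t)) \<partial>lborel)
       + (\<integral>t. indicator {a..b} t *\<^sub>R (du t * cnj (du t)) \<partial>lborel)
       = du b * cnj (u b) - du a * cnj (u a)"
proof -
  have Lu: "L2fun u" and Ldu: "L2fun du" and Lddu: "L2fun ddu"
    using H unfolding H2_with_def by auto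
  have [measurable]: "du \<in> borel_measurable lborel" "ddu \<in> borel_measurable lborel" "u \<in> borel_measurable lborel"
    using Lu Ldu Lddu unfolding L2fun_def by auto
  have idu: "integrable lborel (\<lambda>x. indicator {a..b} x *\<^sub>R du x)"
    using L2_set_integrable[OF Ldu] unfolding set_integrable_def .
  have iddu: "integrable lborel (\<lambda>x. indicator {a..b} x *\<^sub>R ddu x)"
    using L2_set_integrable[OF Lddu] unfolding set_integrable_def .
  define f :: "real \<Rightarrow> real \<Rightarrow> complex" where
    "f = (\<lambda>s t. if a \<le> s \<and> s \<le> t \<and> t \<le> b then cnj (du s) * ddu t else 0)"
  define G :: "real \<times> real \<Rightarrow> real" where
    "G = (\<lambda>p. norm (indicator {a..b} (fst p) *\<^sub>R du (fst p)) * norm (indicator {a..b} (snd p) *\<^sub>R ddu (snd p)))"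
  have [measurable]: "G \<in> borel_measurable (lborel \<Otimes>\<^sub>M lborel)"
    unfolding G_def by measurable
  have fm[measurable]: "case_prod f \<in> borel_measurable (lborel \<Otimes>\<^sub>M lborel)"
  proof -
    have "case_prod f = (\<lambda>p. if a \<le> fst p \<and> fst p \<le> snd p \<and> snd p \<le> b then cnj (du (fst p)) * ddu (snd p) else 0)"
      by (auto simp: f_def fun_eq_iff)
    also have "\<dots> \<in> borel_measurable (lborel \<Otimes>\<^sub>M lborel)"
      by measurable
    finally show ?thesis .
  qed
  have Gi: "integrable (lborel \<Otimes>\<^sub>M lborel) G"
  proof (rule lborel_pair.Fubini_integrable)
    show "G \<in> borel_measurable (lborel \<Otimes>\<^sub>M lborel)" by measurable
    have "(\<lambda>x. \<integral>y. norm (G (x, y)) \<partial>lborel) = (\<lambda>x. norm (indicator {a..b} x *\<^sub>R du x) * (\<integral>y. norm (indicator {a..b} y *\<^sub>R ddu y) \<partial>lborel))"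
      by (simp add: G_def)
    moreover have "integrable lborel \<dots>"
      by (intro integrable_mult_left integrable_norm idu)
    ultimately show "integrable lborel (\<lambda>x. \<integral>y. norm (G (x, y)) \<partial>lborel)" by simp
    show "AE x in lborel. integrable lborel (\<lambda>y. G (x, y))"
      unfolding G_def fst_conv snd_conv by (intro AE_I2 integrable_mult_right integrable_norm iddu)
  qed
  have fi: "integrable (lborel \<Otimes>\<^sub>M lborel) (case_prod f)"
  proof (rule Bochner_Integration.integrable_bound[OF Gi fm])
    show "AE p in lborel \<Otimes>\<^sub>M lborel. norm (case_prod f p) \<le> norm (G p)"
      by (rule AE_I2) (auto simp: f_def G_def indicator_def norm_mult)
  qed
  have F: "(\<integral>y. (\<integral>x. f x y \<partial>lborel) \<partial>lborel) = (\<integral>x. (\<integral>y. f x y \<partial>lborel) \<partial>lborel)"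
    by (rule lborel_pair.Fubini_integral[OF fi])
  have in1: "(\<integral>y. f x y \<partial>lborel) = indicator {a..b} x *\<^sub>R (cnj (du x) * (du b - du x))" for x
  proof (cases "a \<le> x \<and> x \<le> b")
    case True
    have "(\<lambda>y. f x y) = (\<lambda>y. cnj (du x) * (indicator {x..b} y *\<^sub>R ddu y))"
      using True by (auto simp: f_def indicator_def fun_eq_iff)
    then have "(\<integral>y. f x y \<partial>lborel) = cnj (du x) * (\<integral>y. indicator {x..b} y *\<^sub>R ddu y \<partial>lborel)"
      by (simp only: integral_mult_right_zero)
    also have "\<dots> = cnj (du x) * (du b - du x)"
      using True by (simp add: H2_LINT_ddu[OF H])
    finally show ?thesis using True by simp
  next
    case False
    then have "(\<lambda>y. f x y) = (\<lambda>y. 0)" by (auto simp: f_def fun_eq_iff)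
    then show ?thesis using False by simp
  qed
  have in2: "(\<integral>x. f x y \<partial>lborel) = indicator {a..b} y *\<^sub>R (cnj (u y - u a) * ddu y)" for y
  proof (cases "a \<le> y \<and> y \<le> b")
    case True
    have "(\<lambda>x. f x y) = (\<lambda>x. cnj (indicator {a..y} x *\<^sub>R du x) * ddu y)"
      using True by (auto simp: f_def indicator_def fun_eq_iff)
    then have "(\<integral>x. f x y \<partial>lborel) = cnj (\<integral>x. indicator {a..y} x *\<^sub>R du x \<partial>lborel) * ddu y"
      by (simp only: integral_mult_left_zero Bochner_Integration.integral_cnj)
    also have "\<dots> = cnj (u y - u a) * ddu y"
      using True by (simp add: H2_LINT_du[OF H])
    finally show ?thesis using True by simp
  next
    case False
    then have "(\<lambda>x. f x y) = (\<lambda>x. 0)" by (auto simp: f_def fun_eq_iff)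
    then show ?thesis using False by simp
  qed
  have iI: "integrable lborel (\<lambda>t. indicator {a..b} t *\<^sub>R (ddu t * cnj (u t)))"
    by (intro integrable_mult_indicator L2_prod_integrable Lddu Lu) auto
  have iJ: "integrable lborel (\<lambda>t. indicator {a..b} t *\<^sub>R (du t * cnj (du t)))"
    by (intro integrable_mult_indicator L2_prod_integrable Ldu) auto
  have e1: "(\<lambda>y. indicator {a..b} y *\<^sub>R (cnj (u y - u a) * ddu y))
      = (\<lambda>y. indicator {a..b} y *\<^sub>R (ddu y * cnj (u y)) - cnj (u a) * (indicator {a..b} y *\<^sub>R ddu y))"
    by (simp add: fun_eq_iff indicator_def algebra_simps)
  have e2: "(\<lambda>x. indicator {a..b} x *\<^sub>R (cnj (du x) * (du b - du x)))
      = (\<lambda>x. du b * cnj (indicator {a..b} x *\<^sub>R du x) - indicator {a..b} x *\<^sub>R (du x * cnj (du x)))"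
    by (simp add: fun_eq_iff indicator_def algebra_simps)
  have "(\<integral>y. indicator {a..b} y *\<^sub>R (cnj (u y - u a) * ddu y) \<partial>lborel)
      = (\<integral>x. indicator {a..b} x *\<^sub>R (cnj (du x) * (du b - du x)) \<partial>lborel)"
    using F by (simp only: in1 in2)
  also have "(\<integral>y. indicator {a..b} y *\<^sub>R (cnj (u y - u a) * ddu y) \<partial>lborel)
      = (\<integral>t. indicator {a..b} t *\<^sub>R (ddu t * cnj (u t)) \<partial>lborel) - cnj (u a) * (du b - du a)"
  proof -
    have "integrable lborel (\<lambda>y. cnj (u a) * (indicator {a..b} y *\<^sub>R ddu y))"
      by (intro integrable_mult_right iddu)
    then show ?thesis unfolding e1
      by (simp only: Bochner_Integration.integral_diff[OF iI] integral_mult_right_zero H2_LINT_ddu[OF H ab])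
  qed
  also have "(\<integral>x. indicator {a..b} x *\<^sub>R (cnj (du x) * (du b - du x)) \<partial>lborel)
      = du b * cnj (u b - u a) - (\<integral>t. indicator {a..b} t *\<^sub>R (du t * cnj (du t)) \<partial>lborel)"
  proof -
    have "integrable lborel (\<lambda>x. du b * cnj (indicator {a..b} x *\<^sub>R du x))"
      by (intro integrable_mult_right integrable_cnj idu)
    then show ?thesis unfolding e2
      by (simp only: Bochner_Integration.integral_diff[OF _ iJ] integral_mult_right_zero
          Bochner_Integration.integral_cnj H2_LINT_du[OF H ab])
  qed
  finally show ?thesis by (simp add: algebra_simps)
qed

lemma integrable_tendsto_zero_aux:
  fixes g :: "real \<Rightarrow> real"
  assumes gi: "integrable lborel g" and L: "L \<noteq> 0"
    and bnd: "\<And>n::nat. \<exists>c. \<forall>x\<in>{c..c + real n}. \<bar>L\<bar> / 2 < \<bar>g x\<bar>"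
  shows False
proof -
  have ai: "integrable lborel (\<lambda>x. \<bar>g x\<bar>)" using gi by auto
  define S where "S = (\<integral>x. \<bar>g x\<bar> \<partial>lborel)"
  have key: "real n * (\<bar>L\<bar> / 2) \<le> S" for n :: nat
  proof -
    obtain c where c: "\<forall>x\<in>{c..c + real n}. \<bar>L\<bar> / 2 < \<bar>g x\<bar>" using bnd by blast
    have "(\<integral>x. indicator {c..c + real n} x * (\<bar>L\<bar> / 2) \<partial>lborel) \<le> S"
      unfolding S_def
    proof (rule integral_mono[OF _ ai])
      show "integrable lborel (\<lambda>x. indicator {c..c + real n} x * (\<bar>L\<bar> / 2) :: real)"
        by (intro integrable_mult_left) (auto simp: integrable_indicator_iff emeasure_lborel_Icc_eq)
      show "indicator {c..c + real n} x * (\<bar>L\<bar> / 2) \<le> \<bar>g x\<bar>" for x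
        using c by (cases "x \<in> {c..c + real n}") (auto simp: indicator_def less_imp_le)
    qed
    then show ?thesis by simp
  qed
  obtain n :: nat where n: "2 * S / \<bar>L\<bar> < real n" using reals_Archimedean2 by blast
  have "S < real n * (\<bar>L\<bar> / 2)"
    using n L by (simp add: field_simps)
  with key[of n] show False by simp
qed

lemma integrable_tendsto_top_zero:
  fixes g :: "real \<Rightarrow> real"
  assumes gi: "integrable lborel g" and t: "(g \<longlongrightarrow> L) at_top"
  shows "L = 0"
proof (rule ccontr)
  assume L: "L \<noteq> 0"
  have "((\<lambda>x. \<bar>g x\<bar>) \<longlongrightarrow> \<bar>L\<bar>) at_top" using t by (rule tendsto_rabs)
  moreover have "\<bar>L\<bar> / 2 < \<bar>L\<bar>" using L by simp
  ultimately have "eventually (\<lambda>x. \<bar>L\<bar> / 2 < \<bar>g x\<bar>) at_top" by (rule order_tendstoD(1))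
  then obtain M where M: "\<And>x. x \<ge> M \<Longrightarrow> \<bar>L\<bar> / 2 < \<bar>g x\<bar>"
    by (auto simp: eventually_at_top_linorder)
  show False
  proof (rule integrable_tendsto_zero_aux[OF gi L])
    fix n :: nat
    show "\<exists>c. \<forall>x\<in>{c..c + real n}. \<bar>L\<bar> / 2 < \<bar>g x\<bar>"
      by (rule exI[of _ M]) (use M in auto)
  qed
qed

lemma integrable_tendsto_bot_zero:
  fixes g :: "real \<Rightarrow> real"
  assumes gi: "integrable lborel g" and t: "(g \<longlongrightarrow> L) at_bot"
  shows "L = 0"
proof (rule ccontr)
  assume L: "L \<noteq> 0"
  have "((\<lambda>x. \<bar>g x\<bar>) \<longlongrightarrow> \<bar>L\<bar>) at_bot" using t by (rule tendsto_rabs)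
  moreover have "\<bar>L\<bar> / 2 < \<bar>L\<bar>" using L by simp
  ultimately have "eventually (\<lambda>x. \<bar>L\<bar> / 2 < \<bar>g x\<bar>) at_bot" by (rule order_tendstoD(1))
  then obtain M where M: "\<And>x. x \<le> M \<Longrightarrow> \<bar>L\<bar> / 2 < \<bar>g x\<bar>"
    by (auto simp: eventually_at_bot_linorder)
  show False
  proof (rule integrable_tendsto_zero_aux[OF gi L])
    fix n :: nat
    show "\<exists>c. \<forall>x\<in>{c..c + real n}. \<bar>L\<bar> / 2 < \<bar>g x\<bar>"
      by (rule exI[of _ "M - real n"]) (use M in auto)
  qed
qed

lemma H2_Im_zero:
  assumes H: "H2_with u du ddu"
  shows "(\<integral>x. Im (ddu x * cnj (u x)) \<partial>lborel) = 0"
proof -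
  have Lu: "L2fun u" and Ldu: "L2fun du" and Lddu: "L2fun ddu"
    using H unfolding H2_with_def by auto
  define k where "k = (\<lambda>x. Im (ddu x * cnj (u x)))"
  define g where "g = (\<lambda>x. Im (du x * cnj (u x)))"
  have ki: "integrable lborel k" unfolding k_def
    by (intro integrable_Im L2_prod_integrable Lddu Lu)
  have gi: "integrable lborel g" unfolding g_def
    by (intro integrable_Im L2_prod_integrable Ldu Lu)
  have seg: "(\<integral>x. indicator {a..b} x *\<^sub>R k x \<partial>lborel) = g b - g a" if ab: "a \<le> b" for a b
  proof -
    have iI: "integrable lborel (\<lambda>t. indicator {a..b} t *\<^sub>R (ddu t * cnj (u t)))"
      by (intro integrable_mult_indicator L2_prod_integrable Lddu Lu) auto
    have iJ: "integrable lborel (\<lambda>t. indicator {a..b} t *\<^sub>R (du t * cnj (du t)))"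
      by (intro integrable_mult_indicator L2_prod_integrable Ldu) auto
    have "Im ((\<integral>t. indicator {a..b} t *\<^sub>R (ddu t * cnj (u t)) \<partial>lborel)
       + (\<integral>t. indicator {a..b} t *\<^sub>R (du t * cnj (du t)) \<partial>lborel))
       = Im (du b * cnj (u b) - du a * cnj (u a))"
      by (simp only: H2_ibp[OF H ab])
    moreover have "Im (\<integral>t. indicator {a..b} t *\<^sub>R (ddu t * cnj (u t)) \<partial>lborel)
        = (\<integral>x. indicator {a..b} x *\<^sub>R k x \<partial>lborel)"
      using integral_Im[OF iI] by (simp add: k_def)
    moreover have "Im (\<integral>t. indicator {a..b} t *\<^sub>R (du t * cnj (du t)) \<partial>lborel) = 0"
      using integral_Im[OF iJ] by simp
    ultimately show ?thesis by (simp add: g_def)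
  qed
  have kt: "set_integrable lborel {0..} k" and kb: "set_integrable lborel {..0} k"
    unfolding set_integrable_def by (intro integrable_mult_indicator ki; simp)+
  have "((\<lambda>b. set_lebesgue_integral lborel {0..b} k) \<longlongrightarrow> set_lebesgue_integral lborel {0..} k) at_top"
    by (rule tendsto_set_lebesgue_integral_at_top[OF _ kt]) auto
  then have "((\<lambda>b. g 0 + set_lebesgue_integral lborel {0..b} k) \<longlongrightarrow> g 0 + set_lebesgue_integral lborel {0..} k) at_top"
    by (intro tendsto_add tendsto_const)
  moreover have "eventually (\<lambda>b. g 0 + set_lebesgue_integral lborel {0..b} k = g b) at_top"
    by (rule eventually_at_top_linorderI[of 0]) (use seg in \<open>simp add: set_lebesgue_integral_def\<close>)
  ultimately have "(g \<longlongrightarrow> g 0 + set_lebesgue_integral lborel {0..} k) at_top"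
    by (rule Lim_transform_eventually)
  then have T: "g 0 + set_lebesgue_integral lborel {0..} k = 0"
    by (rule integrable_tendsto_top_zero[OF gi])
  have "((\<lambda>a. set_lebesgue_integral lborel {a..0} k) \<longlongrightarrow> set_lebesgue_integral lborel {..0} k) at_bot"
    by (rule tendsto_set_lebesgue_integral_at_bot[OF _ kb]) auto
  then have "((\<lambda>a. g 0 - set_lebesgue_integral lborel {a..0} k) \<longlongrightarrow> g 0 - set_lebesgue_integral lborel {..0} k) at_bot"
    by (intro tendsto_diff tendsto_const)
  moreover have "eventually (\<lambda>a. g 0 - set_lebesgue_integral lborel {a..0} k = g a) at_bot"
    by (rule eventually_at_bot_linorderI[of 0]) (use seg in \<open>simp add: set_lebesgue_integral_def\<close>)
  ultimately have "(g \<longlongrightarrow> g 0 - set_lebesgue_integral lborel {..0} k) at_bot"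
    by (rule Lim_transform_eventually)
  then have B: "g 0 - set_lebesgue_integral lborel {..0} k = 0"
    by (rule integrable_tendsto_bot_zero[OF gi])
  have split: "k = (\<lambda>x. indicator {..0} x *\<^sub>R k x + indicator {0<..} x *\<^sub>R k x)"
    by (auto simp: fun_eq_iff indicator_def)
  have i2: "integrable lborel (\<lambda>x. indicator {0<..} x *\<^sub>R k x)"
    by (intro integrable_mult_indicator ki) simp
  have "(\<integral>x. indicator {0<..} x *\<^sub>R k x \<partial>lborel) = (\<integral>x. indicator {0..} x *\<^sub>R k x \<partial>lborel)"
  proof (rule integral_cong_AE)
    show "AE x in lborel. indicator {0<..} x *\<^sub>R k x = indicator {0..} x *\<^sub>R k x"
      using AE_lborel_singleton[of "0::real"] by eventually_elim (auto simp: indicator_def)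
  qed (use ki in auto)
  then have "(\<integral>x. k x \<partial>lborel) = set_lebesgue_integral lborel {..0} k + set_lebesgue_integral lborel {0..} k"
    apply (subst split)
    apply (subst Bochner_Integration.integral_add)
    using kb i2 by (auto simp: set_lebesgue_integral_def set_integrable_def)
  then show ?thesis using T B unfolding k_def by simp
qed

lemma alg:
  fixes lam u1 u2 a1 a2 :: complex and m v g p :: real
  assumes h1: "- \<i> * (- a1 - of_real m * u1 + of_real v * u1
                 - of_real (2 * g * p) * u1 - of_real (g * p) * u2) = lam * u1"
    and h2: "- \<i> * (of_real (g * p) * u1 + a2 + of_real m * u2
                 - of_real v * u2 + of_real (2 * g * p) * u2) = lam * u2"
  shows "Re lam * ((norm u1)^2 + (norm u2)^2) + Im (a1 * cnj u1) - Im (a2 * cnj u2)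
         = 2 * (g * p) * Im (u1 * cnj u2)"
proof -
  have e1: "- a1 - of_real m * u1 + of_real v * u1 - of_real (2 * g * p) * u1 - of_real (g * p) * u2 = \<i> * lam * u1"
    using arg_cong[OF h1, of "\<lambda>z. \<i> * z"] by (simp add: algebra_simps)
  have e2: "of_real (g * p) * u1 + a2 + of_real m * u2 - of_real v * u2 + of_real (2 * g * p) * u2 = \<i> * lam * u2"
    using arg_cong[OF h2, of "\<lambda>z. \<i> * z"] by (simp add: algebra_simps)
  have r1: "Im ((\<i> * lam * u1) * cnj u1) = Re lam * (norm u1)^2"
    unfolding cmod_power2 by (simp add: algebra_simps power2_eq_square)
  have r2: "Im ((\<i> * lam * u2) * cnj u2) = Re lam * (norm u2)^2"
    unfolding cmod_power2 by (simp add: algebra_simps power2_eq_square)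
  have s1: "Im ((- a1 - of_real m * u1 + of_real v * u1 - of_real (2 * g * p) * u1 - of_real (g * p) * u2) * cnj u1)
     = - Im (a1 * cnj u1) + g * p * Im (u1 * cnj u2)"
    by (simp add: algebra_simps)
  have s2: "Im ((of_real (g * p) * u1 + a2 + of_real m * u2 - of_real v * u2 + of_real (2 * g * p) * u2) * cnj u2)
     = g * p * Im (u1 * cnj u2) + Im (a2 * cnj u2)"
    by (simp add: algebra_simps)
  show ?thesis using r1 r2 s1[unfolded e1] s2[unfolded e2] by (simp add: algebra_simps)
qed

theorem lemma3p1:
  fixes V \<phi> :: "real \<Rightarrow> real" and d Gp Gm \<mu> :: real and lam :: complex
  assumes "periodic_with d V"
    and "exp_localized \<phi>"
    and "stationary_solution V (Gam Gp Gm) \<mu> \<phi>"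
    and "lam \<in> disc_spec V (Gam Gp Gm) \<mu> \<phi>"
  shows "\<bar>Re lam\<bar> \<le> sup_norm (Gam Gp Gm) * (sup_norm \<phi>)^2"
proof -
  define G where "G = Gam Gp Gm"
  from assms(4) obtain u1 du1 ddu1 u2 du2 ddu2 where
    H1: "H2_with u1 du1 ddu1" and H2: "H2_with u2 du2 ddu2"
    and nz: "\<not> (AE x in lborel. u1 x = 0 \<and> u2 x = 0)"
    and eq: "AE x in lborel.
         - \<i> * (- ddu1 x - of_real \<mu> * u1 x + of_real (V x) * u1 x
                 - of_real (2 * G x * (\<phi> x)^2) * u1 x - of_real (G x * (\<phi> x)^2) * u2 x)
           = lam * u1 x \<and>
         - \<i> * (of_real (G x * (\<phi> x)^2) * u1 x + ddu2 x + of_real \<mu> * u2 x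
                 - of_real (V x) * u2 x + of_real (2 * G x * (\<phi> x)^2) * u2 x)
           = lam * u2 x"
    unfolding disc_spec_def G_def by blast
  from assms(2) obtain C \<kappa> where kp: "\<kappa> > 0" and C: "\<And>x. \<bar>\<phi> x\<bar> \<le> C * exp (- \<kappa> * \<bar>x\<bar>)"
    unfolding exp_localized_def by blast
  have C0: "0 \<le> C" using C[of 0] by simp
  have phiC: "\<bar>\<phi> x\<bar> \<le> C" for x
  proof -
    have "exp (- \<kappa> * \<bar>x\<bar>) \<le> 1" using kp by simp
    then have "C * exp (- \<kappa> * \<bar>x\<bar>) \<le> C * 1" using C0 by (intro mult_left_mono) auto
    then show ?thesis using C[of x] by simp
  qed
  have phis: "\<bar>\<phi> x\<bar> \<le> sup_norm \<phi>" for x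
    unfolding sup_norm_def by (rule cSup_upper) (auto intro!: bdd_aboveI2[where M=C] phiC)
  have Gbd: "\<bar>G x\<bar> \<le> \<bar>Gp\<bar> + \<bar>Gm\<bar>" for x
    by (auto simp: G_def Gam_def indicator_def)
  have Gs: "\<bar>G x\<bar> \<le> sup_norm G" for x
    unfolding sup_norm_def by (rule cSup_upper) (auto intro!: bdd_aboveI2[where M="\<bar>Gp\<bar> + \<bar>Gm\<bar>"] Gbd)
  define M where "M = sup_norm G * (sup_norm \<phi>)^2"
  have BM: "\<bar>G x * (\<phi> x)^2\<bar> \<le> M" for x
  proof -
    have "\<bar>\<phi> x\<bar>^2 \<le> (sup_norm \<phi>)^2" by (intro power_mono phis) simp
    then have "\<bar>G x\<bar> * \<bar>\<phi> x\<bar>^2 \<le> sup_norm G * (sup_norm \<phi>)^2"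
      using Gs[of x] by (intro mult_mono) auto
    then show ?thesis by (simp add: M_def abs_mult power_abs)
  qed
  have M0: "0 \<le> M" using BM[of 0] by simp
  have Lu1: "L2fun u1" and Lddu1: "L2fun ddu1" and Lu2: "L2fun u2" and Lddu2: "L2fun ddu2"
    using H1 H2 unfolding H2_with_def by auto
  define n where "n = (\<lambda>x. (norm (u1 x))^2 + (norm (u2 x))^2)"
  have ni: "integrable lborel n"
    using Lu1 Lu2 unfolding n_def L2fun_def by auto
  have i1: "integrable lborel (\<lambda>x. Im (ddu1 x * cnj (u1 x)))"
    by (intro integrable_Im L2_prod_integrable Lddu1 Lu1)
  have i2: "integrable lborel (\<lambda>x. Im (ddu2 x * cnj (u2 x)))"
    by (intro integrable_Im L2_prod_integrable Lddu2 Lu2)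
  define k where "k = (\<lambda>x. Re lam * n x + Im (ddu1 x * cnj (u1 x)) - Im (ddu2 x * cnj (u2 x)))"
  have ki: "integrable lborel k"
    unfolding k_def using ni i1 i2 by auto
  have intk: "(\<integral>x. k x \<partial>lborel) = Re lam * (\<integral>x. n x \<partial>lborel)"
    unfolding k_def using ni i1 i2 H2_Im_zero[OF H1] H2_Im_zero[OF H2]
    by (simp add: Bochner_Integration.integral_diff Bochner_Integration.integral_add)
  have kb: "AE x in lborel. \<bar>k x\<bar> \<le> M * n x"
    using eq
  proof eventually_elim
    case (elim x)
    have keq: "k x = 2 * (G x * (\<phi> x)^2) * Im (u1 x * cnj (u2 x))"
      unfolding k_def n_def by (rule alg) (use elim in auto)
    have "\<bar>Im (u1 x * cnj (u2 x))\<bar> \<le> norm (u1 x) * norm (u2 x)"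
      using abs_Im_le_cmod[of "u1 x * cnj (u2 x)"] by (simp add: norm_mult)
    have "0 \<le> (norm (u1 x) - norm (u2 x))^2" by simp
    then have sq: "2 * (norm (u1 x) * norm (u2 x)) \<le> n x"
      unfolding n_def by (simp add: power2_eq_square algebra_simps)
    have "\<bar>k x\<bar> = \<bar>G x * (\<phi> x)^2\<bar> * (2 * \<bar>Im (u1 x * cnj (u2 x))\<bar>)"
      unfolding keq by (simp add: abs_mult)
    also have "\<dots> \<le> M * (2 * (norm (u1 x) * norm (u2 x)))"
      using BM[of x] \<open>\<bar>Im (u1 x * cnj (u2 x))\<bar> \<le> norm (u1 x) * norm (u2 x)\<close>
      by (intro mult_mono) auto
    also have "\<dots> \<le> M * n x"
      using sq M0 by (intro mult_left_mono) auto
    finally show ?case .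
  qed
  have n0: "\<And>x. 0 \<le> n x" unfolding n_def by simp
  have Npos: "0 < (\<integral>x. n x \<partial>lborel)"
  proof -
    have N0: "0 \<le> (\<integral>x. n x \<partial>lborel)" using n0 by (simp add: integral_nonneg_AE)
    have "(\<integral>x. n x \<partial>lborel) \<noteq> 0"
    proof
      assume "(\<integral>x. n x \<partial>lborel) = 0"
      then have "AE x in lborel. n x = 0"
        using integral_nonneg_eq_0_iff_AE[OF ni] n0 by simp
      then have "AE x in lborel. u1 x = 0 \<and> u2 x = 0"
        by eventually_elim (auto simp: n_def add_nonneg_eq_0_iff)
      with nz show False by simp
    qed
    with N0 show ?thesis by simp
  qed
  have "\<bar>Re lam\<bar> * (\<integral>x. n x \<partial>lborel) = \<bar>\<integral>x. k x \<partial>lborel\<bar>"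
    using intk Npos by (simp add: abs_mult)
  also have "\<dots> \<le> (\<integral>x. \<bar>k x\<bar> \<partial>lborel)" by (rule integral_abs_bound)
  also have "\<dots> \<le> (\<integral>x. M * n x \<partial>lborel)"
    using kb ki ni by (intro integral_mono_AE) auto
  also have "\<dots> = M * (\<integral>x. n x \<partial>lborel)" by simp
  finally have "\<bar>Re lam\<bar> * (\<integral>x. n x \<partial>lborel) \<le> M * (\<integral>x. n x \<partial>lborel)" .
  then have "\<bar>Re lam\<bar> \<le> M" using Npos by simp
  then show ?thesis unfolding M_def G_def .
qed

end
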